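(* Suppose $|\hat\tau(u)-\tau(u)|\le\rho$ for every unit $u$, and let $\mathcal U_{\mathsf{LTK}}$ be the output of the LEA algorithm. Let $A_1=(\tau_K+2\rho,1]$, $K_1=|\{u:\tau(u)\in A_1\}|$, $K_0=K-K_1$, and $V(A_1)=\sum_{u:\tau(u)\in A_1}\tau(u)$. Then $$\frac{V_{\mathcal U_{\mathsf{LTK}}}([0,1])}{V_{\mathcal U^*}([0,1])}\ \ge\ 1-\frac{4\rho K_0}{V(A_1)+(\tau_K+2\rho)K_0}.$$
   Context: There are $M$ units with pairwise distinct treatment effects $\tau(u)\in[0,1]$ and a budget $K\in\{1,\dots,M\}$; $\tau_K$ is the $K$-th largest value of $\tau(u)$; $\mathcal U^*$ is the set of the $K$ units with the largest $\tau(u)$. For a set $S$ of units and an interval $A\subseteq[0,1]$, $V_S(A)=\sum_{u\in S,\,\tau(u)\in A}\tau(u)$. The LEA algorithm with parameters $\epsilon,\delta,\gamma>0$ sets $\rho=\gamma\sqrt\epsilon$, obtains for each unit an estimate $\hat\tau(u)$ (accurate to within $\rho$ with probability at least $1-\delta/M$), and outputs $\mathcal U_{\mathsf{LTK}}$, the $K$ units with largest $\hat\tau(u)$. *)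

theory Defs
  imports Complex_Main
begin

definition kth_largest :: "real set \<Rightarrow> nat \<Rightarrow> real" where
  "kth_largest S K = rev (sorted_list_of_set S) ! (K - 1)"

definition is_topK :: "('a \<Rightarrow> real) \<Rightarrow> 'a set \<Rightarrow> nat \<Rightarrow> 'a set \<Rightarrow> bool" where
  "is_topK f U K S \<longleftrightarrow> S \<subseteq> U \<and> card S = K \<and> (\<forall>u\<in>S. \<forall>v\<in>U - S. f v \<le> f u)"

definition Vsum :: "('a \<Rightarrow> real) \<Rightarrow> 'a set \<Rightarrow> real set \<Rightarrow> real" where
  "Vsum tau S A = (\<Sum>u\<in>{u\<in>S. tau u \<in> A}. tau u)"

end

theory Submission
  imports Defs
begin

lemma kth_char:
  assumes "finite S" "1 \<le> K" "K \<le> card S"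
  shows "kth_largest S K \<in> S \<and> card {x\<in>S. kth_largest S K < x} = K - 1
         \<and> card {x\<in>S. kth_largest S K \<le> x} = K"
proof -
  define ys where "ys = sorted_list_of_set S"
  define n where "n = length ys"
  have n: "n = card S" unfolding n_def ys_def by simp
  have sw: "sorted_wrt (<) ys" unfolding ys_def by simp
  have dist: "distinct ys" unfolding ys_def by simp
  have setys: "set ys = S" unfolding ys_def using assms(1) by simp
  have T: "kth_largest S K = ys ! (n - K)"
    unfolding kth_largest_def ys_def[symmetric] n_def using assms n n_def
    by (simp add: rev_nth)
  have lt: "\<And>i j. i < n \<Longrightarrow> j < n \<Longrightarrow> ys ! i < ys ! j \<longleftrightarrow> i < j"
  proof -
    fix i j assume "i < n" "j < n"
    then show "ys ! i < ys ! j \<longleftrightarrow> i < j"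
      using sw n_def sorted_wrt_nth_less[OF sw]
      by (metis linorder_neqE_nat order_less_asym order_less_irrefl)
  qed
  have inj: "inj_on ((!) ys) {..<n}"
    using dist n_def by (simp add: inj_on_nth)
  have e1: "{x\<in>S. ys ! (n - K) < x} = (!) ys ` {n - K<..<n}"
  proof
    show "{x\<in>S. ys ! (n - K) < x} \<subseteq> (!) ys ` {n - K<..<n}"
    proof
      fix x assume "x \<in> {x\<in>S. ys ! (n - K) < x}"
      then obtain i where i: "i < n" "x = ys ! i" "ys ! (n-K) < ys ! i"
        using setys n_def by (auto simp: in_set_conv_nth)
      then have "n - K < i" using lt[of "n-K" i] assms n by auto
      then show "x \<in> (!) ys ` {n - K<..<n}" using i by auto
    qed
    show "(!) ys ` {n - K<..<n} \<subseteq> {x\<in>S. ys ! (n - K) < x}"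
      using lt assms n setys n_def by auto
  qed
  have e2: "{x\<in>S. ys ! (n - K) \<le> x} = (!) ys ` {n - K..<n}"
  proof
    show "{x\<in>S. ys ! (n - K) \<le> x} \<subseteq> (!) ys ` {n - K..<n}"
    proof
      fix x assume "x \<in> {x\<in>S. ys ! (n - K) \<le> x}"
      then obtain i where i: "i < n" "x = ys ! i" "ys ! (n-K) \<le> ys ! i"
        using setys n_def by (auto simp: in_set_conv_nth)
      then have "n - K \<le> i" using lt[of i "n-K"] assms n by auto
      then show "x \<in> (!) ys ` {n - K..<n}" using i by auto
    qed
    show "(!) ys ` {n - K..<n} \<subseteq> {x\<in>S. ys ! (n - K) \<le> x}"
      using lt assms n setys n_def by (auto simp: le_less)
  qed
  have c1': "card ((!) ys ` {n - K<..<n}) = card {n - K<..<n}"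
    by (rule card_image[OF inj_on_subset[OF inj]]) auto
  have c2': "card ((!) ys ` {n - K..<n}) = card {n - K..<n}"
    by (rule card_image[OF inj_on_subset[OF inj]]) auto
  have c1: "card ((!) ys ` {n - K<..<n}) = K - 1"
    using c1' assms n by simp
  have c2: "card ((!) ys ` {n - K..<n}) = K"
    using c2' assms n by simp
  have "ys ! (n - K) \<in> S" using setys n_def assms n by auto
  then show ?thesis using T e1 e2 c1 c2 by simp
qed

lemma final_arith:
  fixes L S VA K0 T rho :: real
  assumes "L \<ge> VA + K0 * (T - 2*rho)" "VA + K0 * T \<le> S" "S \<le> VA + K0 * (T + 2*rho)"
    "VA \<ge> 0" "L \<ge> 0" "K0 \<ge> 1" "T \<ge> 0" "rho > 0"
  shows "L / S \<ge> 1 - 4 * rho * K0 / (VA + (T + 2 * rho) * K0)"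
proof -
  define D where "D = VA + (T + 2 * rho) * K0"
  have Dp: "D > 0" unfolding D_def using assms by (smt (verit) mult_pos_pos)
  have rhs: "1 - 4 * rho * K0 / D = (VA + K0 * (T - 2*rho)) / D"
    using Dp by (simp add: field_simps D_def)
  show ?thesis
  proof (cases "VA + K0 * (T - 2*rho) \<le> 0")
    case True
    then have "(VA + K0 * (T - 2*rho)) / D \<le> 0" using Dp by (simp add: divide_nonpos_pos)
    moreover have "L / S \<ge> 0" using assms
      by (smt (verit) divide_nonneg_nonneg mult_nonneg_nonneg)
    ultimately show ?thesis using rhs D_def by simp
  next
    case False
    have Sp: "S > 0" using False assms by (smt (verit) mult_left_mono)
    have "(VA + K0 * (T - 2*rho)) / D \<le> (VA + K0 * (T - 2*rho)) / S"
      using False Sp assms(3) Dp mult_pos_pos[OF Dp Sp] by (intro divide_left_mono) (auto simp: D_def algebra_simps)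
    also have "\<dots> \<le> L / S" using Sp assms(1) by (simp add: divide_right_mono)
    finally show ?thesis using rhs D_def by simp
  qed
qed

theorem claim2:
  fixes U :: "'a set" and tau tauhat :: "'a \<Rightarrow> real"
    and K :: nat and eps gamma rho :: real
    and Ustar ULTK :: "'a set"
  assumes finU: "finite U"
    and distinct: "inj_on tau U"
    and range: "\<forall>u\<in>U. 0 \<le> tau u \<and> tau u \<le> 1"
    and K: "1 \<le> K" "K \<le> card U"
    and eps: "eps > 0" and gamma: "gamma > 0"
    and rho: "rho = gamma * sqrt eps"
    and Ustar: "is_topK tau U K Ustar"
    and est: "\<forall>u\<in>U. \<bar>tauhat u - tau u\<bar> \<le> rho"
    and ULTK: "is_topK tauhat U K ULTK"
  shows
    "let tauK = kth_largest (tau ` U) K;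
         A1 = {tauK + 2 * rho <.. 1};
         K1 = card {u\<in>U. tau u \<in> A1};
         K0 = real K - real K1
     in Vsum tau ULTK {0..1} / Vsum tau Ustar {0..1}
        \<ge> 1 - 4 * rho * K0 / (Vsum tau U A1 + (tauK + 2 * rho) * K0)"
proof -
  define T where "T = kth_largest (tau ` U) K"
  have rhop: "rho > 0" using rho eps gamma by simp
  have cS: "card (tau ` U) = card U" using card_image[OF distinct] .
  have kc: "T \<in> tau ` U \<and> card {x\<in>tau ` U. T < x} = K - 1 \<and> card {x\<in>tau ` U. T \<le> x} = K"
    unfolding T_def using kth_char[of "tau ` U" K] finU K cS by simp
  define G where "G = {u\<in>U. T < tau u}"
  define H where "H = {u\<in>U. T \<le> tau u}"
  define A where "A = {u\<in>U. tau u \<in> {T + 2 * rho <.. 1}}"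
  have imG: "tau ` G = {x\<in>tau ` U. T < x}" unfolding G_def by auto
  have imH: "tau ` H = {x\<in>tau ` U. T \<le> x}" unfolding H_def by auto
  have cG: "card G = K - 1"
    using kc imG card_image[OF inj_on_subset[OF distinct, of G]] G_def by auto
  have cH: "card H = K"
    using kc imH card_image[OF inj_on_subset[OF distinct, of H]] H_def by auto
  have T0: "T \<ge> 0" using kc range by auto
  have finG: "finite G" "finite H" "finite A" using finU G_def H_def A_def by auto
  have UsU: "Ustar \<subseteq> U" "card Ustar = K" "\<forall>u\<in>Ustar. \<forall>v\<in>U - Ustar. tau v \<le> tau u"
    using Ustar unfolding is_topK_def by auto
  have ULU: "ULTK \<subseteq> U" "card ULTK = K" "\<forall>u\<in>ULTK. \<forall>v\<in>U - ULTK. tauhat v \<le> tauhat u"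
    using ULTK unfolding is_topK_def by auto
  have finUs: "finite Ustar" "finite ULTK" using UsU ULU finU finite_subset by auto
  have UsH: "Ustar \<subseteq> H"
  proof
    fix u assume u: "u \<in> Ustar"
    show "u \<in> H"
    proof (rule ccontr)
      assume nu: "u \<notin> H"
      then have tu: "tau u < T" using u UsU H_def by auto
      have "H \<subseteq> Ustar"
      proof
        fix v assume v: "v \<in> H"
        show "v \<in> Ustar"
        proof (rule ccontr)
          assume "v \<notin> Ustar"
          then have "tau v \<le> tau u" using UsU u v H_def by auto
          then show False using v H_def tu by auto
        qed
      qed
      then have "insert u H \<subseteq> Ustar" using u by auto
      then have "card (insert u H) \<le> K" using card_mono[OF finUs(1)] UsU by metis
      then show False using nu cH finG by simp
    qed
  qed
  have UsT: "\<forall>u\<in>Ustar. T \<le> tau u" using UsH H_def by auto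
  have AG: "A \<subseteq> G" using A_def G_def rhop by auto
  have GH: "G \<subseteq> H" using G_def H_def by auto
  have HUs: "H = Ustar" using card_subset_eq[OF finG(2) UsH] UsU cH by simp
  have AUs: "A \<subseteq> Ustar" using AG GH HUs by auto
  have AUL: "A \<subseteq> ULTK"
  proof
    fix u assume u: "u \<in> A"
    show "u \<in> ULTK"
    proof (rule ccontr)
      assume nu: "u \<notin> ULTK"
      have "ULTK \<subseteq> G"
      proof
        fix v assume v: "v \<in> ULTK"
        have vU: "v \<in> U" using v ULU by auto
        have "tauhat u \<le> tauhat v" using ULU v u nu A_def by auto
        moreover have "tauhat u \<ge> tau u - rho" "tauhat v \<le> tau v + rho"
          using est u vU A_def by (auto simp: abs_le_iff)
        moreover have "tau u > T + 2 * rho" using u A_def by auto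
        ultimately show "v \<in> G" using v ULU G_def by auto
      qed
      then have "K \<le> K - 1" using card_mono[OF finG(1)] ULU cG by metis
      then show False using K by simp
    qed
  qed
  have ULlow: "\<forall>v\<in>ULTK. T - 2 * rho \<le> tau v"
  proof
    fix v assume v: "v \<in> ULTK"
    show "T - 2 * rho \<le> tau v"
    proof (rule ccontr)
      assume "\<not> T - 2 * rho \<le> tau v"
      then have "v \<notin> Ustar" using UsT rhop by force
      have "\<not> Ustar \<subseteq> ULTK"
      proof
        assume "Ustar \<subseteq> ULTK"
        then have "Ustar = ULTK" using card_subset_eq[OF finUs(2)] UsU ULU by metis
        then show False using v \<open>v \<notin> Ustar\<close> by simp
      qed
      then obtain w where w: "w \<in> Ustar" "w \<notin> ULTK" by auto
      have wU: "w \<in> U" "v \<in> U" using v w UsU ULU by auto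
      have "tauhat w \<le> tauhat v" using ULU v w UsU by auto
      moreover have "tauhat w \<ge> tau w - rho" "tauhat v \<le> tau v + rho"
        using est wU by (auto simp: abs_le_iff)
      moreover have "tau w \<ge> T" using UsT w by auto
      ultimately show False using \<open>\<not> T - 2 * rho \<le> tau v\<close> by linarith
    qed
  qed
  have K1: "card A \<le> K - 1" using card_mono[OF finG(1) AG] cG by simp
  define K0 where "K0 = real K - real (card A)"
  have K0ge: "K0 \<ge> 1" using K1 K K0_def by linarith
  have cUsA: "real (card (Ustar - A)) = K0"
    using card_Diff_subset[OF finG(3) AUs] K1 UsU K0_def K by (simp add: of_nat_diff)
  have cULA: "real (card (ULTK - A)) = K0"
    using card_Diff_subset[OF finG(3) AUL] K1 ULU K0_def K by (simp add: of_nat_diff)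
  have V01: "\<And>S. S \<subseteq> U \<Longrightarrow> Vsum tau S {0..1} = sum tau S"
    unfolding Vsum_def using range by (intro sum.cong) auto
  have VA: "Vsum tau U {T + 2 * rho <.. 1} = sum tau A"
    unfolding Vsum_def A_def by simp
  have sL: "sum tau ULTK = sum tau A + sum tau (ULTK - A)"
    using sum.subset_diff[OF AUL finUs(2), of tau] by simp
  have sS: "sum tau Ustar = sum tau A + sum tau (Ustar - A)"
    using sum.subset_diff[OF AUs finUs(1), of tau] by simp
  have b1: "sum tau (ULTK - A) \<ge> K0 * (T - 2 * rho)"
    using sum_bounded_below[of "ULTK - A" "T - 2 * rho" tau] ULlow cULA by auto
  have b2: "sum tau (Ustar - A) \<ge> K0 * T"
    using sum_bounded_below[of "Ustar - A" T tau] UsT cUsA by auto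
  have b3: "sum tau (Ustar - A) \<le> K0 * (T + 2 * rho)"
  proof -
    have "\<forall>u\<in>Ustar - A. tau u \<le> T + 2 * rho" using A_def UsU range by fastforce
    then show ?thesis
      using sum_bounded_above[of "Ustar - A" tau "T + 2 * rho"] cUsA by auto
  qed
  have nA: "sum tau A \<ge> 0" using range A_def by (intro sum_nonneg) auto
  have nL: "sum tau ULTK \<ge> 0" using range ULU by (intro sum_nonneg) auto
  have "sum tau ULTK / sum tau Ustar \<ge> 1 - 4 * rho * K0 / (sum tau A + (T + 2 * rho) * K0)"
    using final_arith[of "sum tau A" K0 T rho "sum tau ULTK" "sum tau Ustar"]
      sL sS b1 b2 b3 nA nL K0ge T0 rhop by linarith
  then show ?thesis
    unfolding Let_def T_def[symmetric] A_def[symmetric] K0_def[symmetric]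
    using V01[OF UsU(1)] V01[OF ULU(1)] VA by (simp add: A_def)
qed

end
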